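(* Let $\mathcal V$ be a variety of $\tau$-algebras axiomatised by the equational theory $T$, and let $\mathbf{Cl}(\mathcal V)$ be the clone $\mathcal V$-algebra. Then: (1) $\mathbf{Cl}(\mathcal V)$ is a finite dimensional clone $\tau$-algebra; (2) the congruence lattice $\mathrm{Con}\,\mathbf{Cl}(\mathcal V)$ is isomorphic to the lattice $L(T)$ of all equational theories (of type $\tau$) containing $T$; (3) if $w\in F_{\mathcal V}$ has dimension $n>0$ in $\mathbf{Cl}(\mathcal V)$, then there is a $\tau$-term $t$ whose variables are among $v_1,\dots,v_n$ with $t\in w$; (4) if $w\in F_{\mathcal V}$ has dimension $0$ in $\mathbf{Cl}(\mathcal V)$, then there is a $\tau$-term $t(v_1)$ (with variables among $v_1$) with $t(v_1)\in w$ and $\mathcal V\models t(v_1)=t(v_2)$; (5) $\mathbf{Cl}(\mathcal V)$ is isomorphic to the block algebra $(\mathrm{Clo}\,\mathbf F_{\mathcal V})^\top$.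
   Context: $\mathbf F_{\mathcal V}$ is the free algebra of $\mathcal V$ over the countable set $I=\{v_1,v_2,\dots\}$ of generators; its elements are equivalence classes of $\tau$-terms in the variables $v_i$ modulo $\mathcal V$-equality. The clone $\mathcal V$-algebra is $\mathbf{Cl}(\mathcal V)=(\mathbf F_{\mathcal V},q_n^{\mathbf F}\ (n\ge0),\mathsf e_i^{\mathbf F}\ (i\ge1))$ with $\mathsf e_i^{\mathbf F}=v_i$ and $q_n^{\mathbf F}(a,b_1,\dots,b_n)=s(a)$, where $s$ is the unique endomorphism of $\mathbf F_{\mathcal V}$ with $s(v_i)=b_i$ ($i\le n$) and $s(v_i)=v_i$ ($i>n$). A clone $\tau$-algebra is an algebra $(C,\sigma\ (\sigma\in\tau),q_n,\mathsf e_i)$, $\mathsf e_i$ nullary and $q_n$ of arity $n+1$, satisfying: (C1) $q_n(\mathsf e_i,x_1,\dots,x_n)=x_i$ ($i\le n$); (C2) $q_n(\mathsf e_j,x_1,\dots,x_n)=\mathsf e_j$ ($j>n$); (C3) $q_n(x,\mathsf e_1,\dots,\mathsf e_n)=x$; (C4) $q_k(x,y_1,\dots,y_k)=q_n(x,y_1,\dots,y_k,\mathsf e_{k+1},\dots,\mathsf e_n)$ ($n>k$); (C5) $q_n(q_n(x,\mathbf y),\mathbf z)=q_n(x,q_n(y_1,\mathbf z),\dots,q_n(y_n,\mathbf z))$; (C6) $q_n(\sigma(x_1,\dots,x_k),\mathbf y)=\sigma(q_n(x_1,\mathbf y),\dots,q_n(x_k,\mathbf y))$. An element $a$ is independent of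 $\mathsf e_n$ if $q_n(a,\mathsf e_1,\dots,\mathsf e_{n-1},\mathsf e_{n+1})=a$; its dimension is $0$ if it depends on no $\mathsf e_n$, otherwise the largest $n$ it depends on (infinite if infinitely many); finite dimensional means all elements have finite dimension. $\mathrm{Clo}\,\mathbf F_{\mathcal V}$ is the clone of term operations of $\mathbf F_{\mathcal V}$ (all operations $\mathbf a\mapsto t(\mathbf a)$ for $\tau$-terms $t$ in at most $k$ variables, on $F^k$, together with their restrictions obtained by dropping fictitious last arguments, including nullary ones). With $\omega=\{1,2,\dots\}$, the top extension of $f:A^n\to A$ is $f^\top(s)=f(s_1,\dots,s_n)$ for $s\in A^\omega$; $(\mathrm{Clo}\,\mathbf F_{\mathcal V})^\top=\{f^\top: f\in\mathrm{Clo}\,\mathbf F_{\mathcal V}\}$ viewed as a subalgebra of the full functional clone $\tau$-algebra with value domain $\mathbf F_{\mathcal V}$, whose universe is all maps $F_{\mathcal V}^\omega\to F_{\mathcal V}$, with $\mathsf e_i(s)=s_i$, $q_n(\varphi,\psi_1,\dots,\psi_n)(s)=\varphi(s[\psi_1(s),\dots,\psi_n(s)])$ ($s[b_1,\dots,b_n]$ replacing the first $n$ entries), $\sigma(\psi_1,\dots,\psi_k)(s)=\sigma^{\mathbf F}(\psi_1(s),\dots,\psi_k(s))$. *)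

theory Defs
  imports "HOL-Library.FuncSet"
begin

text \<open>Operation symbols have type 'f, with arity function ar.  Variable v_i is Var i,
  for i >= 1 (the index 0 is not a generator and does not occur in well-formed terms).\<close>

datatype 'f trm = Var nat | Fn 'f "'f trm list"

fun vars :: "'f trm \<Rightarrow> nat set" where
  "vars (Var i) = {i}"
| "vars (Fn f ts) = \<Union> (set (map vars ts))"

fun wf_trm :: "('f \<Rightarrow> nat) \<Rightarrow> 'f trm \<Rightarrow> bool" where
  "wf_trm ar (Var i) = (1 \<le> i)"
| "wf_trm ar (Fn f ts) = (length ts = ar f \<and> (\<forall>t\<in>set ts. wf_trm ar t))"

fun subst :: "(nat \<Rightarrow> 'f trm) \<Rightarrow> 'f trm \<Rightarrow> 'f trm" where
  "subst \<theta> (Var i) = \<theta> i"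
| "subst \<theta> (Fn f ts) = Fn f (map (subst \<theta>) ts)"

definition wf_terms :: "('f \<Rightarrow> nat) \<Rightarrow> 'f trm set" where
  "wf_terms ar = {t. wf_trm ar t}"

definition eq_theory :: "('f \<Rightarrow> nat) \<Rightarrow> ('f trm \<times> 'f trm) set \<Rightarrow> bool" where
  "eq_theory ar T \<longleftrightarrow>
     T \<subseteq> wf_terms ar \<times> wf_terms ar \<and>
     (\<forall>t\<in>wf_terms ar. (t, t) \<in> T) \<and>
     (\<forall>s t. (s, t) \<in> T \<longrightarrow> (t, s) \<in> T) \<and>
     (\<forall>s t u. (s, t) \<in> T \<longrightarrow> (t, u) \<in> T \<longrightarrow> (s, u) \<in> T) \<and>
     (\<forall>f ts us. length ts = ar f \<longrightarrow> list_all2 (\<lambda>t u. (t, u) \<in> T) ts us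
         \<longrightarrow> (Fn f ts, Fn f us) \<in> T) \<and>
     (\<forall>s t \<theta>. (s, t) \<in> T \<longrightarrow> (\<forall>i\<ge>1. wf_trm ar (\<theta> i))
         \<longrightarrow> (subst \<theta> s, subst \<theta> t) \<in> T)"

definition LT :: "('f \<Rightarrow> nat) \<Rightarrow> ('f trm \<times> 'f trm) set \<Rightarrow> ('f trm \<times> 'f trm) set set" where
  "LT ar T = {T'. eq_theory ar T' \<and> T \<subseteq> T'}"

text \<open>V |= s = t iff (s,t) \<in> T; F_V consists of the T-classes of well-formed terms.\<close>

definition FV :: "('f \<Rightarrow> nat) \<Rightarrow> ('f trm \<times> 'f trm) set \<Rightarrow> 'f trm set set" where
  "FV ar T = wf_terms ar // T"

definition rep :: "'f trm set \<Rightarrow> 'f trm" where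
  "rep w = (SOME t. t \<in> w)"

definition FV_op :: "('f trm \<times> 'f trm) set \<Rightarrow> 'f \<Rightarrow> 'f trm set list \<Rightarrow> 'f trm set" where
  "FV_op T f ws = T `` {Fn f (map rep ws)}"

definition FV_var :: "('f trm \<times> 'f trm) set \<Rightarrow> nat \<Rightarrow> 'f trm set" where
  "FV_var T i = T `` {Var i}"

definition FV_endo :: "('f \<Rightarrow> nat) \<Rightarrow> ('f trm \<times> 'f trm) set \<Rightarrow> ('f trm set \<Rightarrow> 'f trm set) \<Rightarrow> bool" where
  "FV_endo ar T s \<longleftrightarrow> s \<in> FV ar T \<rightarrow>\<^sub>E FV ar T \<and>
     (\<forall>f ws. set ws \<subseteq> FV ar T \<longrightarrow> length ws = ar f \<longrightarrow>
        s (FV_op T f ws) = FV_op T f (map s ws))"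

definition FV_q :: "('f \<Rightarrow> nat) \<Rightarrow> ('f trm \<times> 'f trm) set \<Rightarrow> nat \<Rightarrow> 'f trm set \<Rightarrow> 'f trm set list \<Rightarrow> 'f trm set" where
  "FV_q ar T n a bs = (THE s. FV_endo ar T s \<and>
       (\<forall>i. 1 \<le> i \<longrightarrow> i \<le> n \<longrightarrow> s (FV_var T i) = bs ! (i - 1)) \<and>
       (\<forall>i. n < i \<longrightarrow> s (FV_var T i) = FV_var T i)) a"

record ('f, 'a) clone_alg =
  carrier :: "'a set"
  ops :: "'f \<Rightarrow> 'a list \<Rightarrow> 'a"
  qop :: "nat \<Rightarrow> 'a \<Rightarrow> 'a list \<Rightarrow> 'a"
  eop :: "nat \<Rightarrow> 'a"

definition clone_algebra :: "('f \<Rightarrow> nat) \<Rightarrow> ('f, 'a, 'b) clone_alg_scheme \<Rightarrow> bool" where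
  "clone_algebra ar A \<longleftrightarrow>
    (let C = carrier A; q = qop A; e = eop A; \<sigma> = ops A in
     (\<forall>i\<ge>1. e i \<in> C) \<and>
     (\<forall>f xs. set xs \<subseteq> C \<longrightarrow> length xs = ar f \<longrightarrow> \<sigma> f xs \<in> C) \<and>
     (\<forall>n x ys. x \<in> C \<longrightarrow> set ys \<subseteq> C \<longrightarrow> length ys = n \<longrightarrow> q n x ys \<in> C) \<and>
     \<comment> \<open>(C1)\<close>
     (\<forall>n i xs. 1 \<le> i \<longrightarrow> i \<le> n \<longrightarrow> set xs \<subseteq> C \<longrightarrow> length xs = n \<longrightarrow> q n (e i) xs = xs ! (i - 1)) \<and>
     \<comment> \<open>(C2)\<close>
     (\<forall>n j xs. n < j \<longrightarrow> set xs \<subseteq> C \<longrightarrow> length xs = n \<longrightarrow> q n (e j) xs = e j) \<and>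
     \<comment> \<open>(C3)\<close>
     (\<forall>n x. x \<in> C \<longrightarrow> q n x (map e [1..<n+1]) = x) \<and>
     \<comment> \<open>(C4)\<close>
     (\<forall>n k x ys. k < n \<longrightarrow> x \<in> C \<longrightarrow> set ys \<subseteq> C \<longrightarrow> length ys = k \<longrightarrow>
         q k x ys = q n x (ys @ map e [k+1..<n+1])) \<and>
     \<comment> \<open>(C5)\<close>
     (\<forall>n x ys zs. x \<in> C \<longrightarrow> set ys \<subseteq> C \<longrightarrow> set zs \<subseteq> C \<longrightarrow> length ys = n \<longrightarrow> length zs = n \<longrightarrow>
         q n (q n x ys) zs = q n x (map (\<lambda>y. q n y zs) ys)) \<and>
     \<comment> \<open>(C6)\<close>
     (\<forall>n f xs ys. set xs \<subseteq> C \<longrightarrow> length xs = ar f \<longrightarrow> set ys \<subseteq> C \<longrightarrow> length ys = n \<longrightarrow>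
         q n (\<sigma> f xs) ys = \<sigma> f (map (\<lambda>x. q n x ys) xs)))"

definition indep :: "('f, 'a, 'b) clone_alg_scheme \<Rightarrow> 'a \<Rightarrow> nat \<Rightarrow> bool" where
  "indep A a n \<longleftrightarrow> qop A n a (map (eop A) ([1..<n] @ [n+1])) = a"

definition finite_dimensional :: "('f, 'a, 'b) clone_alg_scheme \<Rightarrow> bool" where
  "finite_dimensional A \<longleftrightarrow> (\<forall>a\<in>carrier A. finite {n. 1 \<le> n \<and> \<not> indep A a n})"

definition has_dim :: "('f, 'a, 'b) clone_alg_scheme \<Rightarrow> 'a \<Rightarrow> nat \<Rightarrow> bool" where
  "has_dim A a d \<longleftrightarrow>
     (d = 0 \<and> (\<forall>n\<ge>1. indep A a n)) \<or>
     (d > 0 \<and> \<not> indep A a d \<and> (\<forall>n>d. indep A a n))"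

definition Con :: "('f \<Rightarrow> nat) \<Rightarrow> ('f, 'a, 'b) clone_alg_scheme \<Rightarrow> ('a \<times> 'a) set set" where
  "Con ar A = {\<theta>. equiv (carrier A) \<theta> \<and>
     (\<forall>f xs ys. length xs = ar f \<longrightarrow> list_all2 (\<lambda>x y. (x, y) \<in> \<theta>) xs ys
        \<longrightarrow> (ops A f xs, ops A f ys) \<in> \<theta>) \<and>
     (\<forall>n x y xs ys. length xs = n \<longrightarrow> (x, y) \<in> \<theta> \<longrightarrow> list_all2 (\<lambda>x y. (x, y) \<in> \<theta>) xs ys
        \<longrightarrow> (qop A n x xs, qop A n y ys) \<in> \<theta>)}"

definition clone_iso :: "('f \<Rightarrow> nat) \<Rightarrow> ('f, 'a, 'b) clone_alg_scheme \<Rightarrow> ('f, 'c, 'd) clone_alg_scheme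
    \<Rightarrow> ('a \<Rightarrow> 'c) \<Rightarrow> bool" where
  "clone_iso ar A B h \<longleftrightarrow>
     bij_betw h (carrier A) (carrier B) \<and>
     (\<forall>f xs. set xs \<subseteq> carrier A \<longrightarrow> length xs = ar f \<longrightarrow> h (ops A f xs) = ops B f (map h xs)) \<and>
     (\<forall>n x ys. x \<in> carrier A \<longrightarrow> set ys \<subseteq> carrier A \<longrightarrow> length ys = n \<longrightarrow>
        h (qop A n x ys) = qop B n (h x) (map h ys)) \<and>
     (\<forall>i\<ge>1. h (eop A i) = eop B i)"

definition ClV :: "('f \<Rightarrow> nat) \<Rightarrow> ('f trm \<times> 'f trm) set \<Rightarrow> ('f, 'f trm set) clone_alg" where
  "ClV ar T = \<lparr> carrier = FV ar T, ops = FV_op T, qop = FV_q ar T, eop = FV_var T \<rparr>"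

fun term_op :: "('f trm \<times> 'f trm) set \<Rightarrow> 'f trm \<Rightarrow> 'f trm set list \<Rightarrow> 'f trm set" where
  "term_op T (Var i) xs = xs ! (i - 1)"
| "term_op T (Fn f ts) xs = FV_op T f (map (\<lambda>t. term_op T t xs) ts)"

definition term_ops :: "('f \<Rightarrow> nat) \<Rightarrow> ('f trm \<times> 'f trm) set \<Rightarrow> (nat \<times> ('f trm set list \<Rightarrow> 'f trm set)) set" where
  "term_ops ar T = {(k, term_op T t) | k t. wf_trm ar t \<and> vars t \<subseteq> {1..k}}"

text \<open>Clo F_V: term operations (arity k, function on F^k) together with their restrictions
  obtained by dropping fictitious last arguments.\<close>
definition Clo :: "('f \<Rightarrow> nat) \<Rightarrow> ('f trm \<times> 'f trm) set \<Rightarrow> (nat \<times> ('f trm set list \<Rightarrow> 'f trm set)) set" where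
  "Clo ar T = {(m, \<lambda>xs. g (xs @ ys)) | m k g ys.
      (k, g) \<in> term_ops ar T \<and> m \<le> k \<and> set ys \<subseteq> FV ar T \<and> length ys = k - m \<and>
      (\<forall>xs zs zs'. set xs \<subseteq> FV ar T \<longrightarrow> length xs = m \<longrightarrow>
          set zs \<subseteq> FV ar T \<longrightarrow> length zs = k - m \<longrightarrow>
          set zs' \<subseteq> FV ar T \<longrightarrow> length zs' = k - m \<longrightarrow> g (xs @ zs) = g (xs @ zs'))}"

text \<open>F^omega, omega = {1,2,...}: sequences indexed by positive naturals
  (position 0 fixed to undefined).\<close>
definition Omega :: "('f \<Rightarrow> nat) \<Rightarrow> ('f trm \<times> 'f trm) set \<Rightarrow> (nat \<Rightarrow> 'f trm set) set" where
  "Omega ar T = {s. s 0 = undefined \<and> (\<forall>i\<ge>1. s i \<in> FV ar T)}"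

definition top_ext :: "('f \<Rightarrow> nat) \<Rightarrow> ('f trm \<times> 'f trm) set \<Rightarrow> nat \<Rightarrow> ('f trm set list \<Rightarrow> 'f trm set)
    \<Rightarrow> (nat \<Rightarrow> 'f trm set) \<Rightarrow> 'f trm set" where
  "top_ext ar T n f = restrict (\<lambda>s. f (map s [1..<n+1])) (Omega ar T)"

definition seq_upd :: "(nat \<Rightarrow> 'x) \<Rightarrow> 'x list \<Rightarrow> nat \<Rightarrow> 'x" where
  "seq_upd s bs j = (if 1 \<le> j \<and> j \<le> length bs then bs ! (j - 1) else s j)"

text \<open>(Clo F_V)^top with the operations of the full functional clone tau-algebra
  with value domain F_V.\<close>
definition Blk :: "('f \<Rightarrow> nat) \<Rightarrow> ('f trm \<times> 'f trm) set
    \<Rightarrow> ('f, (nat \<Rightarrow> 'f trm set) \<Rightarrow> 'f trm set) clone_alg" where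
  "Blk ar T = \<lparr> carrier = (\<lambda>(n, f). top_ext ar T n f) ` Clo ar T,
     ops = (\<lambda>f \<psi>s. restrict (\<lambda>s. FV_op T f (map (\<lambda>\<psi>. \<psi> s) \<psi>s)) (Omega ar T)),
     qop = (\<lambda>n \<phi> \<psi>s. restrict (\<lambda>s. \<phi> (seq_upd s (map (\<lambda>\<psi>. \<psi> s) \<psi>s))) (Omega ar T)),
     eop = (\<lambda>i. restrict (\<lambda>s. s i) (Omega ar T)) \<rparr>"

end

theory Submission
  imports Defs
begin


lemma finite_vars: "finite (vars t)"
  by (induction t) auto

lemma wf_vars_ge1: "wf_trm ar t \<Longrightarrow> i \<in> vars t \<Longrightarrow> 1 \<le> i"
  by (induction t) auto

lemma subst_cong_eq: "(\<And>i. i \<in> vars t \<Longrightarrow> \<theta> i = \<theta>' i) \<Longrightarrow> subst \<theta> t = subst \<theta>' t"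
  by (induction t) auto

lemma subst_Var: "subst Var t = t"
  by (induction t) (auto simp: map_idI)

lemma subst_subst: "subst \<sigma> (subst \<theta> t) = subst (subst \<sigma> \<circ> \<theta>) t"
  by (induction t) auto

lemma vars_subst: "vars (subst \<theta> t) = (\<Union>i\<in>vars t. vars (\<theta> i))"
  by (induction t) auto

lemma wf_subst: "wf_trm ar t \<Longrightarrow> (\<And>i. i \<in> vars t \<Longrightarrow> wf_trm ar (\<theta> i)) \<Longrightarrow> wf_trm ar (subst \<theta> t)"
  by (induction t) auto

lemma list_all2_map_same: "(\<And>x. x \<in> set xs \<Longrightarrow> P (f x) (g x)) \<Longrightarrow> list_all2 P (map f xs) (map g xs)"
  by (induction xs) auto

lemma eqt_wf: "eq_theory ar E \<Longrightarrow> (s, t) \<in> E \<Longrightarrow> wf_trm ar s \<and> wf_trm ar t"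
  unfolding eq_theory_def wf_terms_def by blast

lemma eqt_refl: "eq_theory ar E \<Longrightarrow> wf_trm ar t \<Longrightarrow> (t, t) \<in> E"
  unfolding eq_theory_def wf_terms_def by blast

lemma eqt_sym: "eq_theory ar E \<Longrightarrow> (s, t) \<in> E \<Longrightarrow> (t, s) \<in> E"
  unfolding eq_theory_def by blast

lemma eqt_trans: "eq_theory ar E \<Longrightarrow> (s, t) \<in> E \<Longrightarrow> (t, u) \<in> E \<Longrightarrow> (s, u) \<in> E"
  unfolding eq_theory_def by blast

lemma eqt_Fn: "eq_theory ar E \<Longrightarrow> length ts = ar f \<Longrightarrow> list_all2 (\<lambda>t u. (t, u) \<in> E) ts us
   \<Longrightarrow> (Fn f ts, Fn f us) \<in> E"
  unfolding eq_theory_def by blast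

lemma eqt_subst: "eq_theory ar E \<Longrightarrow> (s, t) \<in> E \<Longrightarrow> (\<And>i. 1 \<le> i \<Longrightarrow> wf_trm ar (\<theta> i))
   \<Longrightarrow> (subst \<theta> s, subst \<theta> t) \<in> E"
  unfolding eq_theory_def by blast

lemma eqt_subst_cong:
  assumes E: "eq_theory ar E"
  shows "wf_trm ar t \<Longrightarrow> (\<And>i. i \<in> vars t \<Longrightarrow> (\<theta> i, \<theta>' i) \<in> E) \<Longrightarrow> (subst \<theta> t, subst \<theta>' t) \<in> E"
proof (induction t)
  case (Var x)
  then show ?case by simp
next
  case (Fn f ts)
  have "list_all2 (\<lambda>t u. (t, u) \<in> E) (map (subst \<theta>) ts) (map (subst \<theta>') ts)"
    by (rule list_all2_map_same) (use Fn in auto)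
  then show ?case using Fn.prems eqt_Fn[OF E] by simp
qed

lemma eqt_equiv: "eq_theory ar E \<Longrightarrow> equiv (wf_terms ar) E"
  unfolding eq_theory_def equiv_def refl_on_def sym_def trans_def by blast



locale eqth =
  fixes ar :: "'f \<Rightarrow> nat" and T :: "('f trm \<times> 'f trm) set"
  assumes E: "eq_theory ar T"
begin

abbreviation cl where "cl t \<equiv> T `` {t}"

lemma wfE: "(s, t) \<in> T \<Longrightarrow> wf_trm ar s \<and> wf_trm ar t" using eqt_wf[OF E] .
lemma reflT: "wf_trm ar t \<Longrightarrow> (t, t) \<in> T" using eqt_refl[OF E] .
lemma symT: "(s, t) \<in> T \<Longrightarrow> (t, s) \<in> T" using eqt_sym[OF E] .
lemma transT: "(s, t) \<in> T \<Longrightarrow> (t, u) \<in> T \<Longrightarrow> (s, u) \<in> T" using eqt_trans[OF E] .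
lemma equivT: "equiv (wf_terms ar) T" using eqt_equiv[OF E] .

lemma cl_in_FV: "wf_trm ar t \<Longrightarrow> cl t \<in> FV ar T"
  unfolding FV_def by (rule quotientI) (simp add: wf_terms_def)

lemma cl_eq: "(s, t) \<in> T \<Longrightarrow> cl s = cl t"
  by (rule equiv_class_eq[OF equivT])

lemma cl_eq_iff: "wf_trm ar s \<Longrightarrow> cl s = cl t \<longleftrightarrow> (s, t) \<in> T"
proof
  assume s: "wf_trm ar s" and c: "cl s = cl t"
  have "s \<in> cl s" using reflT[OF s] by simp
  then have "(t, s) \<in> T" using c by simp
  then show "(s, t) \<in> T" by (rule symT)
qed (rule cl_eq)

lemma in_cl: "(s, t) \<in> T \<Longrightarrow> t \<in> cl s" by simp

lemma FV_elem: assumes "w \<in> FV ar T"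
  shows "rep w \<in> w" "wf_trm ar (rep w)" "w = cl (rep w)"
proof -
  obtain t where t: "wf_trm ar t" "w = cl t" using assms unfolding FV_def wf_terms_def quotient_def by auto
  have "t \<in> w" using t reflT by auto
  then show rw: "rep w \<in> w" unfolding rep_def by (rule someI)
  then have tr: "(t, rep w) \<in> T" using t by simp
  then show "wf_trm ar (rep w)" using wfE by blast
  show "w = cl (rep w)" using cl_eq[OF tr] t(2) by simp
qed

lemma cl_rep: "w \<in> FV ar T \<Longrightarrow> cl (rep w) = w"
  using FV_elem(3) by force

lemma FV_mem: "w \<in> FV ar T \<Longrightarrow> t \<in> w \<Longrightarrow> w = cl t \<and> wf_trm ar t"
proof -
  assume w: "w \<in> FV ar T" and t: "t \<in> w"
  then have "(rep w, t) \<in> T" using FV_elem(3)[OF w] by blast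
  then show ?thesis using cl_eq wfE cl_rep[OF w] by blast
qed

lemma rep_cl: "wf_trm ar t \<Longrightarrow> (rep (cl t), t) \<in> T"
proof -
  assume t: "wf_trm ar t"
  have "(t, rep (cl t)) \<in> T" using FV_elem(1)[OF cl_in_FV[OF t]] by simp
  then show ?thesis by (rule symT)
qed

lemma FV_wf: "w \<in> FV ar T \<Longrightarrow> t \<in> w \<Longrightarrow> wf_trm ar t"
  using FV_mem by blast

lemma FV_op_eq: "FV_op T f ws = cl (Fn f (map rep ws))"
  unfolding FV_op_def by simp

lemma FV_op_cls: "(\<And>t. t \<in> set ts \<Longrightarrow> wf_trm ar t) \<Longrightarrow> length ts = ar f \<Longrightarrow>
   FV_op T f (map cl ts) = cl (Fn f ts)"
  unfolding FV_op_eq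
  apply (rule cl_eq)
  apply (rule eqt_Fn[OF E])
   apply simp
  apply (simp add: list_all2_conv_all_nth rep_cl)
  done

lemma FV_op_in: "set ws \<subseteq> FV ar T \<Longrightarrow> length ws = ar f \<Longrightarrow> FV_op T f ws \<in> FV ar T"
  unfolding FV_op_eq by (rule cl_in_FV) (auto dest: FV_elem(2))

lemma FV_var_in: "1 \<le> i \<Longrightarrow> FV_var T i \<in> FV ar T"
  unfolding FV_var_def by (rule cl_in_FV) simp

definition Sb :: "(nat \<Rightarrow> 'f trm) \<Rightarrow> 'f trm set \<Rightarrow> 'f trm set" where
  "Sb \<theta> = restrict (\<lambda>w. cl (subst \<theta> (rep w))) (FV ar T)"

lemma Sb_in: "(\<And>i. 1 \<le> i \<Longrightarrow> wf_trm ar (\<theta> i)) \<Longrightarrow> w \<in> FV ar T \<Longrightarrow> Sb \<theta> w \<in> FV ar T"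
proof -
  assume th: "\<And>i. 1 \<le> i \<Longrightarrow> wf_trm ar (\<theta> i)" and w: "w \<in> FV ar T"
  have "wf_trm ar (subst \<theta> (rep w))"
    by (rule wf_subst[OF FV_elem(2)[OF w]]) (meson th wf_vars_ge1 FV_elem(2)[OF w])
  then show ?thesis unfolding Sb_def using w cl_in_FV by simp
qed

lemma Sb_cl: assumes th: "\<And>i. 1 \<le> i \<Longrightarrow> wf_trm ar (\<theta> i)" and t: "wf_trm ar t"
  shows "Sb \<theta> (cl t) = cl (subst \<theta> t)"
proof -
  have "(subst \<theta> (rep (cl t)), subst \<theta> t) \<in> T"
    by (rule eqt_subst[OF E rep_cl[OF t] th])
  then show ?thesis unfolding Sb_def using cl_in_FV[OF t] cl_eq by simp
qed

lemma Sb_var: "(\<And>i. 1 \<le> i \<Longrightarrow> wf_trm ar (\<theta> i)) \<Longrightarrow> 1 \<le> i \<Longrightarrow> Sb \<theta> (FV_var T i) = cl (\<theta> i)"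
proof -
  assume th: "\<And>i. 1 \<le> i \<Longrightarrow> wf_trm ar (\<theta> i)" and i: "1 \<le> i"
  show ?thesis unfolding FV_var_def using Sb_cl[OF th, where t = "Var i"] i by simp
qed

lemma Sb_endo: assumes th: "\<And>i. 1 \<le> i \<Longrightarrow> wf_trm ar (\<theta> i)"
  shows "FV_endo ar T (Sb \<theta>)"
  unfolding FV_endo_def
proof (intro conjI allI impI)
  show "Sb \<theta> \<in> FV ar T \<rightarrow>\<^sub>E FV ar T" using Sb_in[OF th] unfolding Sb_def by auto
  fix f ws assume ws: "set ws \<subseteq> FV ar T" "length ws = ar f"
  have wfr: "\<And>w. w \<in> set ws \<Longrightarrow> wf_trm ar (rep w)" using ws FV_elem(2) by blast
  have "Sb \<theta> (FV_op T f ws) = cl (subst \<theta> (Fn f (map rep ws)))"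
    unfolding FV_op_eq by (rule Sb_cl[OF th]) (use ws wfr in auto)
  also have "\<dots> = cl (Fn f (map (\<lambda>w. rep (Sb \<theta> w)) ws))"
  proof (rule cl_eq, simp, rule eqt_Fn[OF E])
    show "length (map (subst \<theta> \<circ> rep) ws) = ar f" using ws by simp
    show "list_all2 (\<lambda>t u. (t, u) \<in> T) (map (subst \<theta> \<circ> rep) ws) (map (\<lambda>w. rep (Sb \<theta> w)) ws)"
    proof (rule list_all2_map_same)
      fix w assume w: "w \<in> set ws"
      have "wf_trm ar (subst \<theta> (rep w))"
        by (rule wf_subst[OF wfr[OF w]]) (meson th wf_vars_ge1 wfr[OF w])
      note symT[OF rep_cl[OF this]]
      moreover have "Sb \<theta> w = cl (subst \<theta> (rep w))" using w ws unfolding Sb_def by auto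
      ultimately show "((subst \<theta> \<circ> rep) w, rep (Sb \<theta> w)) \<in> T" by simp
    qed
  qed
  also have "\<dots> = FV_op T f (map (Sb \<theta>) ws)" unfolding FV_op_eq by (simp add: comp_def)
  finally show "Sb \<theta> (FV_op T f ws) = FV_op T f (map (Sb \<theta>) ws)" .
qed

lemma endo_unique:
  assumes th: "\<And>i. 1 \<le> i \<Longrightarrow> wf_trm ar (\<theta> i)" and s: "FV_endo ar T s"
    and sv: "\<And>i. 1 \<le> i \<Longrightarrow> s (FV_var T i) = cl (\<theta> i)"
  shows "s = Sb \<theta>"
proof -
  have hom: "\<And>f ws. set ws \<subseteq> FV ar T \<Longrightarrow> length ws = ar f \<Longrightarrow> s (FV_op T f ws) = FV_op T f (map s ws)"
    using s unfolding FV_endo_def by blast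
  have main: "wf_trm ar t \<Longrightarrow> s (cl t) = Sb \<theta> (cl t)" for t
  proof (induction t)
    case (Var i)
    then show ?case using sv Sb_var[OF th] unfolding FV_var_def by simp
  next
    case (Fn f ts)
    have wts: "\<And>t. t \<in> set ts \<Longrightarrow> wf_trm ar t" "length ts = ar f" using Fn.prems by auto
    have inFV: "set (map cl ts) \<subseteq> FV ar T" using wts cl_in_FV by auto
    have "s (cl (Fn f ts)) = s (FV_op T f (map cl ts))" using FV_op_cls[OF wts] by simp
    also have "\<dots> = FV_op T f (map s (map cl ts))" using hom inFV wts by simp
    also have "\<dots> = FV_op T f (map (Sb \<theta>) (map cl ts))" by (simp only: map_map, rule arg_cong[where f="FV_op T f"], rule map_cong, use Fn.IH wts in auto)
    also have "\<dots> = Sb \<theta> (FV_op T f (map cl ts))" using Sb_endo[OF th] inFV wts unfolding FV_endo_def by simp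
    also have "\<dots> = Sb \<theta> (cl (Fn f ts))" using FV_op_cls[OF wts] by simp
    finally show ?case .
  qed
  show ?thesis
  proof
    fix w show "s w = Sb \<theta> w"
    proof (cases "w \<in> FV ar T")
      case True
      then show ?thesis using main[OF FV_elem(2)[OF True]] cl_rep[OF True] by simp
    next
      case False
      then show ?thesis using s unfolding FV_endo_def Sb_def by (auto simp: PiE_def extensional_def)
    qed
  qed
qed

definition thq :: "nat \<Rightarrow> 'f trm set list \<Rightarrow> nat \<Rightarrow> 'f trm" where
  "thq n bs i = (if 1 \<le> i \<and> i \<le> n then rep (bs ! (i - 1)) else Var i)"

lemma thq_wf: "set bs \<subseteq> FV ar T \<Longrightarrow> length bs = n \<Longrightarrow> 1 \<le> i \<Longrightarrow> wf_trm ar (thq n bs i)"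
  unfolding thq_def using FV_elem(2) by (auto intro!: FV_elem(2) nth_mem)

lemma FV_q_Sb: assumes bs: "set bs \<subseteq> FV ar T" "length bs = n"
  shows "FV_q ar T n a bs = Sb (thq n bs) a"
proof -
  note th = thq_wf[OF bs]
  let ?P = "\<lambda>s. FV_endo ar T s \<and>
       (\<forall>i. 1 \<le> i \<longrightarrow> i \<le> n \<longrightarrow> s (FV_var T i) = bs ! (i - 1)) \<and>
       (\<forall>i. n < i \<longrightarrow> s (FV_var T i) = FV_var T i)"
  have "(THE s. ?P s) = Sb (thq n bs)"
  proof (rule the_equality)
    show "?P (Sb (thq n bs))"
    proof (intro conjI allI impI)
      show "FV_endo ar T (Sb (thq n bs))" using Sb_endo[OF th] .
      fix i :: nat
      assume i: "1 \<le> i" "i \<le> n"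
      then have "bs ! (i - 1) \<in> FV ar T" using bs by auto
      then show "Sb (thq n bs) (FV_var T i) = bs ! (i - 1)"
        using Sb_var[where \<theta>="thq n bs", OF th i(1)] i cl_rep by (simp add: thq_def)
    next
      fix i :: nat assume i: "n < i"
      then show "Sb (thq n bs) (FV_var T i) = FV_var T i"
        using Sb_var[where \<theta>="thq n bs" and i=i, OF th] by (simp add: thq_def FV_var_def)
    qed
    fix s assume P: "?P s"
    show "s = Sb (thq n bs)"
    proof (rule endo_unique[OF th])
      show "FV_endo ar T s" using P by blast
      fix i :: nat assume i: "1 \<le> i"
      show "s (FV_var T i) = cl (thq n bs i)"
      proof (cases "i \<le> n")
        case True
        then have "bs ! (i - 1) \<in> FV ar T" using bs i by auto
        then show ?thesis using P i True cl_rep by (simp add: thq_def)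
      next
        case False
        then show ?thesis using P i by (simp add: thq_def FV_var_def)
      qed
    qed
  qed
  then show ?thesis unfolding FV_q_def by simp
qed

lemma FV_q_cl: assumes bs: "set bs \<subseteq> FV ar T" "length bs = n" and t: "wf_trm ar t"
  shows "FV_q ar T n (cl t) bs = cl (subst (thq n bs) t)"
  using FV_q_Sb[OF bs] Sb_cl[OF thq_wf[OF bs] t] by simp

end


context eqth begin

lemma ClV_simps: "carrier (ClV ar T) = FV ar T" "ops (ClV ar T) = FV_op T"
  "qop (ClV ar T) = FV_q ar T" "eop (ClV ar T) = FV_var T"
  unfolding ClV_def by simp_all

lemma q_eval: "set bs \<subseteq> FV ar T \<Longrightarrow> length bs = n \<Longrightarrow> x \<in> FV ar T \<Longrightarrow>
   FV_q ar T n x bs = cl (subst (thq n bs) (rep x))"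
  using FV_q_Sb unfolding Sb_def by simp

lemma cl_subst_cong: "wf_trm ar t \<Longrightarrow> (\<And>i. i \<in> vars t \<Longrightarrow> (\<theta> i, \<theta>' i) \<in> T) \<Longrightarrow>
   cl (subst \<theta> t) = cl (subst \<theta>' t)"
  by (rule cl_eq, rule eqt_subst_cong[OF E])

lemma rep_var: "1 \<le> i \<Longrightarrow> (rep (FV_var T i), Var i) \<in> T"
  unfolding FV_var_def by (rule rep_cl) simp

lemma nth_upt1: "1 \<le> i \<Longrightarrow> i \<le> n \<Longrightarrow> map (FV_var T) [1..<n+1] ! (i - 1) = FV_var T i"
  by (simp del: upt_Suc)

lemma clone_alg: "clone_algebra ar (ClV ar T)"
  unfolding clone_algebra_def Let_def ClV_simps
proof (intro conjI allI impI)
  show "\<And>i. 1 \<le> i \<Longrightarrow> FV_var T i \<in> FV ar T" by (rule FV_var_in)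
  show "\<And>f xs. set xs \<subseteq> FV ar T \<Longrightarrow> length xs = ar f \<Longrightarrow> FV_op T f xs \<in> FV ar T" by (rule FV_op_in)
  show "\<And>n x ys. x \<in> FV ar T \<Longrightarrow> set ys \<subseteq> FV ar T \<Longrightarrow> length ys = n \<Longrightarrow> FV_q ar T n x ys \<in> FV ar T"
    using FV_q_Sb Sb_in thq_wf by metis
next
  fix n i :: nat and xs
  assume i: "1 \<le> i" "i \<le> n" and xs: "set xs \<subseteq> FV ar T" "length xs = n"
  have "FV_q ar T n (FV_var T i) xs = cl (thq n xs i)"
    using FV_q_Sb[OF xs] Sb_var[where \<theta>="thq n xs", OF thq_wf[OF xs] i(1)] by simp
  also have "\<dots> = xs ! (i - 1)"
  proof -
    have "xs ! (i - 1) \<in> FV ar T" using i xs by auto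
    then show ?thesis using i by (simp add: thq_def cl_rep)
  qed
  finally show "FV_q ar T n (FV_var T i) xs = xs ! (i - 1)" .
next
  fix n j :: nat and xs
  assume j: "n < j" and xs: "set xs \<subseteq> FV ar T" "length xs = n"
  have "FV_q ar T n (FV_var T j) xs = cl (thq n xs j)"
    using FV_q_Sb[OF xs] Sb_var[where \<theta>="thq n xs", OF thq_wf[OF xs]] j by simp
  then show "FV_q ar T n (FV_var T j) xs = FV_var T j" using j by (simp add: thq_def FV_var_def)
next
  fix n x assume x: "x \<in> FV ar T"
  let ?bs = "map (FV_var T) [1..<n+1]"
  have bs: "set ?bs \<subseteq> FV ar T" "length ?bs = n" using FV_var_in by auto
  have "FV_q ar T n x ?bs = cl (subst (thq n ?bs) (rep x))" by (rule q_eval[OF bs x])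
  also have "\<dots> = cl (subst Var (rep x))"
  proof (rule cl_subst_cong[OF FV_elem(2)[OF x]])
    fix i assume "i \<in> vars (rep x)"
    then have i: "1 \<le> i" using wf_vars_ge1 FV_elem(2)[OF x] by blast
    show "(thq n ?bs i, Var i) \<in> T"
    proof (cases "i \<le> n")
      case True
      then show ?thesis using i rep_var[OF i] by (simp add: thq_def del: upt_Suc)
    next
      case False
      then show ?thesis using i reflT by (simp add: thq_def)
    qed
  qed
  also have "\<dots> = x" by (simp add: subst_Var cl_rep[OF x])
  finally show "FV_q ar T n x ?bs = x" .
next
  fix n k :: nat and x ys
  assume k: "k < n" and x: "x \<in> FV ar T" and ys: "set ys \<subseteq> FV ar T" "length ys = k"
  let ?zs = "ys @ map (FV_var T) [k+1..<n+1]"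
  have zs: "set ?zs \<subseteq> FV ar T" "length ?zs = n" using FV_var_in ys k by auto
  have "FV_q ar T k x ys = cl (subst (thq k ys) (rep x))" by (rule q_eval[OF ys x])
  also have "\<dots> = cl (subst (thq n ?zs) (rep x))"
  proof (rule cl_subst_cong[OF FV_elem(2)[OF x]])
    fix i assume "i \<in> vars (rep x)"
    then have i: "1 \<le> i" using wf_vars_ge1 FV_elem(2)[OF x] by blast
    show "(thq k ys i, thq n ?zs i) \<in> T"
    proof (cases "i \<le> k")
      case True
      then have "ys ! (i - 1) \<in> FV ar T" using ys i by auto
      moreover have "?zs ! (i - 1) = ys ! (i - 1)"
      proof -
        have "i - 1 < length ys" using True i ys by arith
        then show ?thesis by (simp only: nth_append if_True)
      qed
      ultimately show ?thesis using True i ys k by (simp add: thq_def reflT FV_elem(2))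
    next
      case False
      show ?thesis
      proof (cases "i \<le> n")
        case True
        have "?zs ! (i - 1) = FV_var T i"
        proof -
          have "\<not> i - 1 < length ys" "i - 1 - length ys < n - k" using False True i ys by arith+
          then show ?thesis using False i ys by (simp add: nth_append del: upt_Suc)
        qed
        then show ?thesis using False True i symT[OF rep_var[OF i]] by (simp add: thq_def)
      next
        case F2: False
        then show ?thesis using False i reflT by (simp add: thq_def)
      qed
    qed
  qed
  also have "\<dots> = FV_q ar T n x ?zs" by (rule q_eval[OF zs x, symmetric])
  finally show "FV_q ar T k x ys = FV_q ar T n x ?zs" .
next
  fix n x ys zs
  assume x: "x \<in> FV ar T" and ys: "set ys \<subseteq> FV ar T" and zs: "set zs \<subseteq> FV ar T"
    and l: "length ys = n" "length zs = n"
  have ys': "set ys \<subseteq> FV ar T" "length ys = n" using ys l by auto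
  have zs': "set zs \<subseteq> FV ar T" "length zs = n" using zs l by auto
  note thy = thq_wf[OF ys'] and thz = thq_wf[OF zs']
  let ?ws = "map (\<lambda>y. FV_q ar T n y zs) ys"
  have ws: "set ?ws \<subseteq> FV ar T" "length ?ws = n"
    using ys l FV_q_Sb[OF zs'] Sb_in[OF thz] by auto
  have wfx: "wf_trm ar (rep x)" using FV_elem(2)[OF x] .
  have wfy: "wf_trm ar (subst (thq n ys) (rep x))"
    by (rule wf_subst[OF wfx]) (meson thy wf_vars_ge1 wfx)
  have "FV_q ar T n (FV_q ar T n x ys) zs = Sb (thq n zs) (cl (subst (thq n ys) (rep x)))"
    using FV_q_Sb[OF zs'] q_eval[OF ys' x] by simp
  also have "\<dots> = cl (subst (thq n zs) (subst (thq n ys) (rep x)))"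
    by (rule Sb_cl[OF thz wfy])
  also have "\<dots> = cl (subst (subst (thq n zs) \<circ> thq n ys) (rep x))" by (simp add: subst_subst)
  also have "\<dots> = cl (subst (thq n ?ws) (rep x))"
  proof (rule cl_subst_cong[OF wfx])
    fix i assume "i \<in> vars (rep x)"
    then have i: "1 \<le> i" using wf_vars_ge1 wfx by blast
    show "((subst (thq n zs) \<circ> thq n ys) i, thq n ?ws i) \<in> T"
    proof (cases "i \<le> n")
      case True
      have yi: "ys ! (i - 1) \<in> FV ar T" using ys l i True by auto
      have wfyi: "wf_trm ar (subst (thq n zs) (rep (ys ! (i - 1))))"
        by (rule wf_subst[OF FV_elem(2)[OF yi]]) (meson thz wf_vars_ge1 FV_elem(2)[OF yi])
      have "?ws ! (i - 1) = cl (subst (thq n zs) (rep (ys ! (i - 1))))"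
        using True i l q_eval[OF zs' yi] by simp
      then show ?thesis using True i symT[OF rep_cl[OF wfyi]] by (simp add: thq_def)
    next
      case False
      then show ?thesis using i reflT by (simp add: thq_def)
    qed
  qed
  also have "\<dots> = FV_q ar T n x ?ws" by (rule q_eval[OF ws x, symmetric])
  finally show "FV_q ar T n (FV_q ar T n x ys) zs = FV_q ar T n x ?ws" .
next
  fix n f xs ys
  assume xs: "set xs \<subseteq> FV ar T" "length xs = ar f" and ys: "set ys \<subseteq> FV ar T" "length ys = n"
  have "FV_q ar T n (FV_op T f xs) ys = Sb (thq n ys) (FV_op T f xs)" using FV_q_Sb[OF ys] by simp
  also have "\<dots> = FV_op T f (map (Sb (thq n ys)) xs)"
    using Sb_endo[where \<theta>="thq n ys", OF thq_wf[OF ys]] xs unfolding FV_endo_def by blast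
  also have "map (Sb (thq n ys)) xs = map (\<lambda>x. FV_q ar T n x ys) xs" using FV_q_Sb[OF ys] by simp
  finally show "FV_q ar T n (FV_op T f xs) ys = FV_op T f (map (\<lambda>x. FV_q ar T n x ys) xs)" .
qed

end


context eqth begin

lemma indep_iff:
  assumes w: "w \<in> FV ar T" and t: "t \<in> w" and m: "1 \<le> m"
  shows "indep (ClV ar T) w m \<longleftrightarrow> (t, subst (Var(m := Var (Suc m))) t) \<in> T"
proof -
  let ?bs = "map (FV_var T) ([1..<m] @ [m+1])"
  let ?\<rho> = "Var(m := Var (Suc m))"
  have bs: "set ?bs \<subseteq> FV ar T" "length ?bs = m" using FV_var_in m by auto
  have wt: "wf_trm ar t" and wcl: "w = cl t" using FV_mem[OF w t] by auto
  have rwt: "(rep w, t) \<in> T" using rep_cl[OF wt] wcl by simp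
  have rho: "\<And>i. 1 \<le> i \<Longrightarrow> wf_trm ar (?\<rho> i)" by simp
  have "FV_q ar T m w ?bs = cl (subst (thq m ?bs) (rep w))" by (rule q_eval[OF bs w])
  also have "\<dots> = cl (subst ?\<rho> (rep w))"
  proof (rule cl_subst_cong[OF FV_elem(2)[OF w]])
    fix i assume "i \<in> vars (rep w)"
    then have i: "1 \<le> i" using wf_vars_ge1 FV_elem(2)[OF w] by blast
    show "(thq m ?bs i, ?\<rho> i) \<in> T"
    proof (cases "i < m")
      case True
      have a: "i - 1 < m - 1" using True i by arith
      have "?bs ! (i - 1) = FV_var T i" using a i by (simp add: nth_append del: upt_Suc)
      then show ?thesis using True i rep_var[OF i] by (simp add: thq_def)
    next
      case False
      show ?thesis
      proof (cases "i = m")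
        case True
        have "?bs ! (i - 1) = FV_var T (Suc m)" using True i by (simp add: nth_append del: upt_Suc)
        then show ?thesis using True i rep_var[of "Suc m"] by (simp add: thq_def)
      next
        case F2: False
        then show ?thesis using False i reflT by (simp add: thq_def)
      qed
    qed
  qed
  also have "\<dots> = cl (subst ?\<rho> t)" by (rule cl_eq[OF eqt_subst[OF E rwt rho]])
  finally have q: "FV_q ar T m w ?bs = cl (subst ?\<rho> t)" .
  have "indep (ClV ar T) w m \<longleftrightarrow> cl (subst ?\<rho> t) = cl t"
    unfolding indep_def ClV_simps using q wcl by simp
  also have "\<dots> \<longleftrightarrow> (t, subst ?\<rho> t) \<in> T"
  proof -
    have "wf_trm ar (subst ?\<rho> t)" by (rule wf_subst[OF wt]) (use wf_vars_ge1[OF wt] in auto)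
    then show ?thesis using cl_eq_iff symT by metis
  qed
  finally show ?thesis .
qed

lemma fin_dim: "finite_dimensional (ClV ar T)"
  unfolding finite_dimensional_def ClV_simps
proof
  fix w assume w: "w \<in> FV ar T"
  have "{n. 1 \<le> n \<and> \<not> indep (ClV ar T) w n} \<subseteq> vars (rep w)"
  proof
    fix n assume n: "n \<in> {n. 1 \<le> n \<and> \<not> indep (ClV ar T) w n}"
    show "n \<in> vars (rep w)"
    proof (rule ccontr)
      assume nv: "n \<notin> vars (rep w)"
      have "subst (Var(n := Var (Suc n))) (rep w) = subst Var (rep w)"
        by (rule subst_cong_eq) (use nv in auto)
      then have "(rep w, subst (Var(n := Var (Suc n))) (rep w)) \<in> T"
        using reflT[OF FV_elem(2)[OF w]] by (simp add: subst_Var)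
      then show False using n indep_iff[OF w FV_elem(1)[OF w], of n] by simp
    qed
  qed
  then show "finite {n. 1 \<le> n \<and> \<not> indep (ClV ar T) w n}" using finite_vars finite_subset by blast
qed

lemma reduce_step:
  assumes w: "w \<in> FV ar T" and t: "t \<in> w" and K: "2 \<le> K" and vt: "vars t \<subseteq> {1..K}"
    and ind: "indep (ClV ar T) w K"
  shows "\<exists>t'\<in>w. vars t' \<subseteq> {1..K - 1}"
proof -
  let ?\<rho> = "Var(K := Var (Suc K))" and ?\<sigma> = "Var(Suc K := Var 1)"
  have wt: "wf_trm ar t" and wcl: "w = cl t" using FV_mem[OF w t] by auto
  have "(t, subst ?\<rho> t) \<in> T" using indep_iff[OF w t] K ind by simp
  then have "(subst ?\<sigma> t, subst ?\<sigma> (subst ?\<rho> t)) \<in> T" by (rule eqt_subst[OF E]) simp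
  moreover have "subst ?\<sigma> t = t"
  proof -
    have "subst ?\<sigma> t = subst Var t" by (rule subst_cong_eq) (use vt in auto)
    then show ?thesis by (simp add: subst_Var)
  qed
  moreover have "subst ?\<sigma> (subst ?\<rho> t) = subst (Var(K := Var 1)) t"
    unfolding subst_subst by (rule subst_cong_eq) (use vt in auto)
  ultimately have tt: "(t, subst (Var(K := Var 1)) t) \<in> T" by simp
  show ?thesis
  proof (intro bexI)
    show "subst (Var(K := Var 1)) t \<in> w" using tt wcl by simp
    show "vars (subst (Var(K := Var 1)) t) \<subseteq> {1..K - 1}"
      unfolding vars_subst using vt K by (auto split: if_splits)
  qed
qed

lemma reduce:
  assumes w: "w \<in> FV ar T" and n: "1 \<le> n" and ind: "\<forall>m>n. indep (ClV ar T) w m"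
  shows "\<exists>t\<in>w. vars t \<subseteq> {1..n}"
proof -
  have "\<forall>t\<in>w. vars t \<subseteq> {1..M} \<longrightarrow> (\<exists>t\<in>w. vars t \<subseteq> {1..n})" for M
  proof (induction M)
    case 0
    then show ?case using n by auto
  next
    case (Suc M)
    show ?case
    proof (intro ballI impI)
      fix t assume t: "t \<in> w" and vt: "vars t \<subseteq> {1..Suc M}"
      show "\<exists>t\<in>w. vars t \<subseteq> {1..n}"
      proof (cases "Suc M \<le> n")
        case True
        have "{1..Suc M} \<subseteq> {1..n}" using True by auto
        then show ?thesis using t vt by blast
      next
        case False
        then obtain t' where "t' \<in> w" "vars t' \<subseteq> {1..M}"
          using reduce_step[OF w t _ vt] ind n by fastforce
        then show ?thesis using Suc.IH by blast
      qed
    qed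
  qed
  moreover have "vars (rep w) \<subseteq> {1..Max (insert 0 (vars (rep w)))}"
    using finite_vars[of "rep w"] wf_vars_ge1[OF FV_elem(2)[OF w]] by (auto intro!: Max_ge)
  ultimately show ?thesis using FV_elem(1)[OF w] by blast
qed

lemma part3: "\<forall>w\<in>FV ar T. \<forall>n>0. has_dim (ClV ar T) w n \<longrightarrow> (\<exists>t\<in>w. vars t \<subseteq> {1..n})"
  unfolding has_dim_def using reduce by auto

lemma part4: "\<forall>w\<in>FV ar T. has_dim (ClV ar T) w 0 \<longrightarrow>
          (\<exists>t\<in>w. vars t \<subseteq> {1} \<and> (t, subst (\<lambda>i. if i = 1 then Var 2 else Var i) t) \<in> T)"
proof (intro ballI impI)
  fix w assume w: "w \<in> FV ar T" and d: "has_dim (ClV ar T) w 0"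
  then have ind: "\<forall>n\<ge>1. indep (ClV ar T) w n" unfolding has_dim_def by simp
  then obtain t where t: "t \<in> w" "vars t \<subseteq> {1..1}" using reduce[OF w, of 1] by auto
  have tt: "(t, subst (Var(1 := Var (Suc 1))) t) \<in> T" using indep_iff[OF w t(1)] ind by simp
  have eq: "Var(1 := Var (Suc 1)) = (\<lambda>i. if i = 1 then Var 2 else Var i)" by (auto simp: fun_eq_iff)
  have "(t, subst (\<lambda>i. if i = 1 then Var 2 else Var i) t) \<in> T" using tt unfolding eq .
  moreover have "vars t \<subseteq> {1}" using t(2) by simp
  ultimately show "\<exists>t\<in>w. vars t \<subseteq> {1} \<and> (t, subst (\<lambda>i. if i = 1 then Var 2 else Var i) t) \<in> T"
    using t(1) by blast
qed

end


context eqth begin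

definition hC :: "('f trm set \<times> 'f trm set) set \<Rightarrow> ('f trm \<times> 'f trm) set" where
  "hC \<Theta> = {(s, t). wf_trm ar s \<and> wf_trm ar t \<and> (cl s, cl t) \<in> \<Theta>}"

definition gC :: "('f trm \<times> 'f trm) set \<Rightarrow> ('f trm set \<times> 'f trm set) set" where
  "gC U = {(x, y). x \<in> FV ar T \<and> y \<in> FV ar T \<and> (rep x, rep y) \<in> U}"

lemma Con_D: assumes "\<Theta> \<in> Con ar (ClV ar T)"
  shows "equiv (FV ar T) \<Theta>"
    "\<And>f xs ys. length xs = ar f \<Longrightarrow> list_all2 (\<lambda>x y. (x, y) \<in> \<Theta>) xs ys \<Longrightarrow> (FV_op T f xs, FV_op T f ys) \<in> \<Theta>"
    "\<And>n x y xs ys. length xs = n \<Longrightarrow> (x, y) \<in> \<Theta> \<Longrightarrow> list_all2 (\<lambda>x y. (x, y) \<in> \<Theta>) xs ys \<Longrightarrow> (FV_q ar T n x xs, FV_q ar T n y ys) \<in> \<Theta>"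
  using assms unfolding Con_def ClV_simps by blast+

lemma hC_LT: assumes C: "\<Theta> \<in> Con ar (ClV ar T)" shows "hC \<Theta> \<in> LT ar T"
proof -
  note eqv = Con_D(1)[OF C]
  have refl: "\<And>x. x \<in> FV ar T \<Longrightarrow> (x, x) \<in> \<Theta>" using eqv unfolding equiv_def refl_on_def by blast
  have sym: "\<And>x y. (x, y) \<in> \<Theta> \<Longrightarrow> (y, x) \<in> \<Theta>" using eqv unfolding equiv_def sym_def by blast
  have trans: "\<And>x y z. (x, y) \<in> \<Theta> \<Longrightarrow> (y, z) \<in> \<Theta> \<Longrightarrow> (x, z) \<in> \<Theta>" using eqv unfolding equiv_def trans_def by blast
  have "eq_theory ar (hC \<Theta>)"
    unfolding eq_theory_def
  proof (intro conjI allI impI ballI)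
    show "hC \<Theta> \<subseteq> wf_terms ar \<times> wf_terms ar" unfolding hC_def wf_terms_def by auto
    show "\<And>t. t \<in> wf_terms ar \<Longrightarrow> (t, t) \<in> hC \<Theta>"
      unfolding hC_def wf_terms_def using refl cl_in_FV by auto
    show "\<And>s t. (s, t) \<in> hC \<Theta> \<Longrightarrow> (t, s) \<in> hC \<Theta>" unfolding hC_def using sym by auto
    show "\<And>s t u. (s, t) \<in> hC \<Theta> \<Longrightarrow> (t, u) \<in> hC \<Theta> \<Longrightarrow> (s, u) \<in> hC \<Theta>"
      unfolding hC_def using trans by auto
  next
    fix f ts us
    assume l: "length ts = ar f" and a: "list_all2 (\<lambda>t u. (t, u) \<in> hC \<Theta>) ts us"
    have lu: "length us = ar f" using l a list_all2_lengthD by metis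
    have wts: "\<forall>t\<in>set ts. wf_trm ar t" and wus: "\<forall>u\<in>set us. wf_trm ar u"
      using a unfolding hC_def list_all2_conv_all_nth by (auto simp: in_set_conv_nth)
    have "list_all2 (\<lambda>x y. (x, y) \<in> \<Theta>) (map cl ts) (map cl us)"
      using a unfolding hC_def list_all2_conv_all_nth by auto
    then have "(FV_op T f (map cl ts), FV_op T f (map cl us)) \<in> \<Theta>"
      using Con_D(2)[OF C] l by simp
    then show "(Fn f ts, Fn f us) \<in> hC \<Theta>"
      unfolding hC_def using FV_op_cls wts wus l lu by auto
  next
    fix s t and \<theta>' :: "nat \<Rightarrow> 'f trm"
    assume st: "(s, t) \<in> hC \<Theta>" and th: "\<forall>i\<ge>1. wf_trm ar (\<theta>' i)"
    have ws: "wf_trm ar s" and wt: "wf_trm ar t" and c: "(cl s, cl t) \<in> \<Theta>" using st unfolding hC_def by auto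
    define n where "n = Max (insert 0 (vars s \<union> vars t))"
    have sn: "\<And>i. i \<in> vars s \<Longrightarrow> i \<le> n" "\<And>i. i \<in> vars t \<Longrightarrow> i \<le> n"
      unfolding n_def using finite_vars by (auto intro!: Max_ge)
    define bs where "bs = map (\<lambda>i. cl (\<theta>' i)) [1..<n+1]"
    have bs: "set bs \<subseteq> FV ar T" "length bs = n" unfolding bs_def using th cl_in_FV by auto
    have key: "\<And>u. wf_trm ar u \<Longrightarrow> (\<And>i. i \<in> vars u \<Longrightarrow> i \<le> n) \<Longrightarrow>
        FV_q ar T n (cl u) bs = cl (subst \<theta>' u)"
    proof -
      fix u assume wu: "wf_trm ar u" and un: "\<And>i. i \<in> vars u \<Longrightarrow> i \<le> n"
      have "FV_q ar T n (cl u) bs = cl (subst (thq n bs) u)" by (rule FV_q_cl[OF bs wu])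
      also have "\<dots> = cl (subst \<theta>' u)"
      proof (rule cl_subst_cong[OF wu])
        fix i assume iu: "i \<in> vars u"
        have i: "1 \<le> i" "i \<le> n" using wf_vars_ge1[OF wu iu] un[OF iu] by auto
        have "[1..<n+1] ! (i - 1) = 1 + (i - 1)" by (rule nth_upt) (use i in arith)
        then have "bs ! (i - 1) = cl (\<theta>' i)" unfolding bs_def using i by (simp del: upt_Suc)
        then show "(thq n bs i, \<theta>' i) \<in> T" using i th rep_cl by (simp add: thq_def)
      qed
      finally show "FV_q ar T n (cl u) bs = cl (subst \<theta>' u)" .
    qed
    have "list_all2 (\<lambda>x y. (x, y) \<in> \<Theta>) bs bs"
      using bs refl by (auto simp: list_all2_conv_all_nth intro!: refl nth_mem)
    then have "(FV_q ar T n (cl s) bs, FV_q ar T n (cl t) bs) \<in> \<Theta>"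
      using Con_D(3)[OF C] bs c by blast
    then have "(cl (subst \<theta>' s), cl (subst \<theta>' t)) \<in> \<Theta>" using key ws wt sn by simp
    moreover have "wf_trm ar (subst \<theta>' s)" "wf_trm ar (subst \<theta>' t)"
      using wf_subst ws wt th wf_vars_ge1 by metis+
    ultimately show "(subst \<theta>' s, subst \<theta>' t) \<in> hC \<Theta>" unfolding hC_def by simp
  qed
  moreover have "T \<subseteq> hC \<Theta>"
  proof
    fix p assume p: "p \<in> T"
    obtain s t where [simp]: "p = (s, t)" by force
    have "wf_trm ar s" "wf_trm ar t" using wfE p by auto
    then show "p \<in> hC \<Theta>" using cl_eq[of s t] p refl cl_in_FV unfolding hC_def by auto
  qed
  ultimately show ?thesis unfolding LT_def by simp
qed

lemma LT_D: assumes "U \<in> LT ar T" shows "eq_theory ar U" "T \<subseteq> U"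
  using assms unfolding LT_def by auto

lemma gC_Con: assumes U: "U \<in> LT ar T" shows "gC U \<in> Con ar (ClV ar T)"
proof -
  note EU = LT_D(1)[OF U] and TU = LT_D(2)[OF U]
  have eqv: "equiv (FV ar T) (gC U)"
    unfolding equiv_def refl_on_def sym_def trans_def gC_def
    using eqt_refl[OF EU] eqt_sym[OF EU] eqt_trans[OF EU] FV_elem(2) by blast
  have repT: "\<And>x. x \<in> FV ar T \<Longrightarrow> wf_trm ar (rep x)" using FV_elem(2) by blast
  have ops: "(FV_op T f xs, FV_op T f ys) \<in> gC U"
    if l: "length xs = ar f" and a: "list_all2 (\<lambda>x y. (x, y) \<in> gC U) xs ys" for f xs ys
  proof -
    have ly: "length ys = ar f" using l a list_all2_lengthD by metis
    have xs: "set xs \<subseteq> FV ar T" and ys: "set ys \<subseteq> FV ar T"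
      using a unfolding gC_def list_all2_conv_all_nth by (auto simp: in_set_conv_nth)
    have wx: "wf_trm ar (Fn f (map rep xs))" using xs l repT by auto
    have wy: "wf_trm ar (Fn f (map rep ys))" using ys ly repT by auto
    have "(Fn f (map rep xs), Fn f (map rep ys)) \<in> U"
      apply (rule eqt_Fn[OF EU])
      using l a unfolding gC_def list_all2_conv_all_nth by auto
    moreover have "(rep (FV_op T f xs), Fn f (map rep xs)) \<in> U" using rep_cl[OF wx] TU unfolding FV_op_eq by blast
    moreover have "(Fn f (map rep ys), rep (FV_op T f ys)) \<in> U" using symT[OF rep_cl[OF wy]] TU unfolding FV_op_eq by blast
    ultimately have "(rep (FV_op T f xs), rep (FV_op T f ys)) \<in> U" using eqt_trans[OF EU] by blast
    then show ?thesis unfolding gC_def using FV_op_in xs ys l ly by auto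
  qed
  have qs: "(FV_q ar T n x xs, FV_q ar T n y ys) \<in> gC U"
    if l: "length xs = n" and xy: "(x, y) \<in> gC U" and a: "list_all2 (\<lambda>x y. (x, y) \<in> gC U) xs ys" for n x y xs ys
  proof -
    have ly: "length ys = n" using l a list_all2_lengthD by metis
    have xs: "set xs \<subseteq> FV ar T" and ys: "set ys \<subseteq> FV ar T"
      using a unfolding gC_def list_all2_conv_all_nth by (auto simp: in_set_conv_nth)
    have x: "x \<in> FV ar T" and y: "y \<in> FV ar T" and rxy: "(rep x, rep y) \<in> U" using xy unfolding gC_def by auto
    have xs': "set xs \<subseteq> FV ar T" "length xs = n" using xs l by auto
    have ys': "set ys \<subseteq> FV ar T" "length ys = n" using ys ly by auto
    have wx: "wf_trm ar (subst (thq n xs) (rep x))"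
      by (rule wf_subst[OF repT[OF x]]) (meson thq_wf[OF xs'] wf_vars_ge1 repT[OF x])
    have wy: "wf_trm ar (subst (thq n ys) (rep y))"
      by (rule wf_subst[OF repT[OF y]]) (meson thq_wf[OF ys'] wf_vars_ge1 repT[OF y])
    have q1: "FV_q ar T n x xs = cl (subst (thq n xs) (rep x))" by (rule q_eval[OF xs' x])
    have q2: "FV_q ar T n y ys = cl (subst (thq n ys) (rep y))" by (rule q_eval[OF ys' y])
    have "(subst (thq n xs) (rep x), subst (thq n xs) (rep y)) \<in> U"
      by (rule eqt_subst[OF EU rxy]) (rule thq_wf[OF xs'])
    moreover have "(subst (thq n xs) (rep y), subst (thq n ys) (rep y)) \<in> U"
    proof (rule eqt_subst_cong[OF EU repT[OF y]])
      fix i assume "i \<in> vars (rep y)"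
      then have i: "1 \<le> i" using wf_vars_ge1 repT[OF y] by blast
      show "(thq n xs i, thq n ys i) \<in> U"
      proof (cases "i \<le> n")
        case True
        then have "(xs ! (i - 1), ys ! (i - 1)) \<in> gC U" using a l i by (auto simp: list_all2_conv_all_nth)
        then show ?thesis using True i unfolding gC_def thq_def by simp
      next
        case False
        then show ?thesis using i eqt_refl[OF EU] by (simp add: thq_def)
      qed
    qed
    moreover have "(rep (FV_q ar T n x xs), subst (thq n xs) (rep x)) \<in> U" using rep_cl[OF wx] TU q1 by auto
    moreover have "(subst (thq n ys) (rep y), rep (FV_q ar T n y ys)) \<in> U" using symT[OF rep_cl[OF wy]] TU q2 by auto
    ultimately have "(rep (FV_q ar T n x xs), rep (FV_q ar T n y ys)) \<in> U" using eqt_trans[OF EU] by blast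
    then show ?thesis unfolding gC_def using q1 q2 cl_in_FV wx wy by auto
  qed
  show ?thesis unfolding Con_def ClV_simps using eqv ops qs by blast
qed

lemma gh: assumes C: "\<Theta> \<in> Con ar (ClV ar T)" shows "gC (hC \<Theta>) = \<Theta>"
proof -
  have sub: "\<Theta> \<subseteq> FV ar T \<times> FV ar T" using Con_D(1)[OF C] unfolding equiv_def refl_on_def by blast
  show ?thesis
  proof (intro set_eqI iffI)
    fix p assume "p \<in> gC (hC \<Theta>)"
    then show "p \<in> \<Theta>" unfolding gC_def hC_def using cl_rep by auto
  next
    fix p assume p: "p \<in> \<Theta>"
    then obtain x y where [simp]: "p = (x, y)" and x: "x \<in> FV ar T" and y: "y \<in> FV ar T" using sub by blast
    show "p \<in> gC (hC \<Theta>)" unfolding gC_def hC_def using p x y cl_rep FV_elem(2) by auto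
  qed
qed

lemma hg: assumes U: "U \<in> LT ar T" shows "hC (gC U) = U"
proof -
  note EU = LT_D(1)[OF U] and TU = LT_D(2)[OF U]
  show ?thesis
  proof (intro set_eqI iffI)
    fix p assume p: "p \<in> hC (gC U)"
    then obtain s t where [simp]: "p = (s, t)" and s: "wf_trm ar s" and t: "wf_trm ar t"
      and r: "(rep (cl s), rep (cl t)) \<in> U" unfolding hC_def gC_def by auto
    have "(s, rep (cl s)) \<in> U" using symT[OF rep_cl[OF s]] TU by auto
    moreover have "(rep (cl t), t) \<in> U" using rep_cl[OF t] TU by auto
    ultimately show "p \<in> U" using r eqt_trans[OF EU] by force
  next
    fix p assume p: "p \<in> U"
    then obtain s t where [simp]: "p = (s, t)" by force
    have s: "wf_trm ar s" and t: "wf_trm ar t" using eqt_wf[OF EU] p by auto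
    have "(rep (cl s), s) \<in> U" using rep_cl[OF s] TU by auto
    moreover have "(t, rep (cl t)) \<in> U" using symT[OF rep_cl[OF t]] TU by auto
    ultimately have "(rep (cl s), rep (cl t)) \<in> U" using p eqt_trans[OF EU] by force
    then show "p \<in> hC (gC U)" unfolding hC_def gC_def using s t cl_in_FV by auto
  qed
qed

lemma part2: "\<exists>h. bij_betw h (Con ar (ClV ar T)) (LT ar T) \<and>
          (\<forall>\<theta>1\<in>Con ar (ClV ar T). \<forall>\<theta>2\<in>Con ar (ClV ar T). \<theta>1 \<subseteq> \<theta>2 \<longleftrightarrow> h \<theta>1 \<subseteq> h \<theta>2)"
proof (intro exI conjI ballI)
  show "bij_betw hC (Con ar (ClV ar T)) (LT ar T)"
    by (rule bij_betw_byWitness[where f'=gC]) (use gh hg hC_LT gC_Con in auto)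
next
  fix \<theta>1 \<theta>2 assume c1: "\<theta>1 \<in> Con ar (ClV ar T)" and c2: "\<theta>2 \<in> Con ar (ClV ar T)"
  show "\<theta>1 \<subseteq> \<theta>2 \<longleftrightarrow> hC \<theta>1 \<subseteq> hC \<theta>2"
  proof
    assume "\<theta>1 \<subseteq> \<theta>2" then show "hC \<theta>1 \<subseteq> hC \<theta>2" unfolding hC_def by auto
  next
    assume "hC \<theta>1 \<subseteq> hC \<theta>2"
    then have "gC (hC \<theta>1) \<subseteq> gC (hC \<theta>2)" unfolding gC_def by auto
    then show "\<theta>1 \<subseteq> \<theta>2" using gh[OF c1] gh[OF c2] by simp
  qed
qed

end


context eqth begin

definition hB :: "'f trm set \<Rightarrow> (nat \<Rightarrow> 'f trm set) \<Rightarrow> 'f trm set" where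
  "hB w = restrict (\<lambda>s. cl (subst (\<lambda>i. rep (s i)) (rep w))) (Omega ar T)"

lemma Blk_simps: "carrier (Blk ar T) = (\<lambda>(n, f). top_ext ar T n f) ` Clo ar T"
  "ops (Blk ar T) = (\<lambda>f \<psi>s. restrict (\<lambda>s. FV_op T f (map (\<lambda>\<psi>. \<psi> s) \<psi>s)) (Omega ar T))"
  "qop (Blk ar T) = (\<lambda>n \<phi> \<psi>s. restrict (\<lambda>s. \<phi> (seq_upd s (map (\<lambda>\<psi>. \<psi> s) \<psi>s))) (Omega ar T))"
  "eop (Blk ar T) = (\<lambda>i. restrict (\<lambda>s. s i) (Omega ar T))"
  unfolding Blk_def by simp_all

lemma Om_wf: "s \<in> Omega ar T \<Longrightarrow> 1 \<le> i \<Longrightarrow> wf_trm ar (rep (s i))"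
  unfolding Omega_def using FV_elem(2) by blast

lemma hB_app: assumes s: "s \<in> Omega ar T" and w: "w \<in> FV ar T" and t: "t \<in> w"
  shows "hB w s = cl (subst (\<lambda>i. rep (s i)) t)"
proof -
  have wt: "wf_trm ar t" and wcl: "w = cl t" using FV_mem[OF w t] by auto
  have "(rep w, t) \<in> T" using rep_cl[OF wt] wcl by simp
  then have "(subst (\<lambda>i. rep (s i)) (rep w), subst (\<lambda>i. rep (s i)) t) \<in> T"
    by (rule eqt_subst[OF E]) (rule Om_wf[OF s])
  then show ?thesis unfolding hB_def using s cl_eq by simp
qed

lemma term_op_eval: "wf_trm ar t \<Longrightarrow> vars t \<subseteq> {1..length xs} \<Longrightarrow> set xs \<subseteq> FV ar T \<Longrightarrow>
   term_op T t xs = cl (subst (\<lambda>i. rep (xs ! (i - 1))) t)"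
proof (induction t)
  case (Var i)
  then have "xs ! (i - 1) \<in> FV ar T" by auto
  then show ?case using cl_rep by simp
next
  case (Fn f ts)
  let ?\<theta> = "\<lambda>i. rep (xs ! (i - 1))"
  have wts: "\<And>t. t \<in> set ts \<Longrightarrow> wf_trm ar t" "length ts = ar f" using Fn.prems by auto
  have vts: "\<And>t. t \<in> set ts \<Longrightarrow> vars t \<subseteq> {1..length xs}" using Fn.prems by auto
  have meq: "map (\<lambda>t. term_op T t xs) ts = map cl (map (subst ?\<theta>) ts)"
    using Fn.IH wts vts Fn.prems(3) by simp
  have lts: "length ts = ar f" using Fn.prems(1) by simp
  have wsub: "\<And>t. t \<in> set (map (subst ?\<theta>) ts) \<Longrightarrow> wf_trm ar t"
  proof -
    fix u assume "u \<in> set (map (subst ?\<theta>) ts)"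
    then obtain t where t: "t \<in> set ts" "u = subst ?\<theta> t" by auto
    have "wf_trm ar (subst ?\<theta> t)"
    proof (rule wf_subst[OF wts(1)[OF t(1)]])
      fix i assume "i \<in> vars t"
      then have "1 \<le> i" "i \<le> length xs" using vts[OF t(1)] by auto
      then have "xs ! (i - 1) \<in> FV ar T" using Fn.prems(3) by auto
      then show "wf_trm ar (?\<theta> i)" using FV_elem(2) by blast
    qed
    then show "wf_trm ar u" using t by simp
  qed
  have "term_op T (Fn f ts) xs = FV_op T f (map cl (map (subst ?\<theta>) ts))"
    by (simp only: term_op.simps meq)
  also have "\<dots> = cl (Fn f (map (subst ?\<theta>) ts))"
  proof -
    have "length (map (subst ?\<theta>) ts) = ar f" using lts by simp
    then show ?thesis using FV_op_cls[OF wsub] by blast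
  qed
  finally show ?case by simp
qed

lemma top_term: assumes s: "s \<in> Omega ar T" and t: "wf_trm ar t" and vt: "vars t \<subseteq> {1..k}"
  shows "term_op T t (map s [1..<k+1]) = cl (subst (\<lambda>i. rep (s i)) t)"
proof -
  have "set (map s [1..<k+1]) \<subseteq> FV ar T" using s unfolding Omega_def by auto
  moreover have "vars t \<subseteq> {1..length (map s [1..<k+1])}" using vt by (simp del: upt_Suc)
  ultimately have "term_op T t (map s [1..<k+1]) = cl (subst (\<lambda>i. rep (map s [1..<k+1] ! (i - 1))) t)"
    using term_op_eval[OF t] by blast
  also have "subst (\<lambda>i. rep (map s [1..<k+1] ! (i - 1))) t = subst (\<lambda>i. rep (s i)) t"
  proof (rule subst_cong_eq)
    fix i assume "i \<in> vars t"
    then have i: "1 \<le> i" "i \<le> k" using vt by auto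
    have "[1..<k+1] ! (i - 1) = 1 + (i - 1)" by (rule nth_upt) (use i in arith)
    then show "rep (map s [1..<k+1] ! (i - 1)) = rep (s i)" using i by (simp del: upt_Suc)
  qed
  finally show ?thesis .
qed

lemma vars_bound: "\<exists>k. vars t \<subseteq> {1..k}" if "wf_trm ar t"
proof -
  have "vars t \<subseteq> {1..Max (insert 0 (vars t))}"
    using finite_vars[of t] wf_vars_ge1[OF that] by (auto intro!: Max_ge)
  then show ?thesis by blast
qed

lemma hB_top: assumes t: "wf_trm ar t" and vt: "vars t \<subseteq> {1..k}"
  shows "hB (cl t) = top_ext ar T k (term_op T t)"
proof
  fix s show "hB (cl t) s = top_ext ar T k (term_op T t) s"
  proof (cases "s \<in> Omega ar T")
    case True
    have "t \<in> cl t" using reflT[OF t] by simp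
    then show ?thesis using hB_app[OF True cl_in_FV[OF t]] top_term[OF True t vt]
      unfolding top_ext_def using True by simp
  next
    case False
    then show ?thesis unfolding hB_def top_ext_def by simp
  qed
qed

lemma hB_bij: "bij_betw hB (FV ar T) (carrier (Blk ar T))"
  unfolding bij_betw_def Blk_simps
proof (intro conjI)
  show "inj_on hB (FV ar T)"
  proof (rule inj_onI)
    fix w1 w2 assume w1: "w1 \<in> FV ar T" and w2: "w2 \<in> FV ar T" and eq: "hB w1 = hB w2"
    define s0 where "s0 = (\<lambda>i::nat. if i = 0 then undefined else cl (Var i :: 'f trm))"
    have s0: "s0 \<in> Omega ar T" unfolding Omega_def s0_def using cl_in_FV by auto
    have ev: "hB w s0 = w" if w: "w \<in> FV ar T" for w
    proof -
      have "hB w s0 = cl (subst (\<lambda>i. rep (s0 i)) (rep w))" using hB_app[OF s0 w FV_elem(1)[OF w]] .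
      also have "\<dots> = cl (subst Var (rep w))"
      proof (rule cl_subst_cong[OF FV_elem(2)[OF w]])
        fix i assume "i \<in> vars (rep w)"
        then have "1 \<le> i" using wf_vars_ge1 FV_elem(2)[OF w] by blast
        then show "(rep (s0 i), Var i) \<in> T" unfolding s0_def using rep_cl[of "Var i"] by simp
      qed
      also have "\<dots> = w" using cl_rep[OF w] by (simp add: subst_Var)
      finally show ?thesis .
    qed
    show "w1 = w2" using ev[OF w1] ev[OF w2] eq by metis
  qed
next
  show "hB ` FV ar T = (\<lambda>(n, f). top_ext ar T n f) ` Clo ar T"
  proof (intro set_eqI iffI)
    fix \<phi> assume "\<phi> \<in> hB ` FV ar T"
    then obtain w where w: "w \<in> FV ar T" and ph: "\<phi> = hB w" by blast
    let ?t = "rep w"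
    have wt: "wf_trm ar ?t" using FV_elem(2)[OF w] .
    obtain k where vt: "vars ?t \<subseteq> {1..k}" using vars_bound[OF wt] by blast
    have "(k, term_op T ?t) \<in> term_ops ar T" unfolding term_ops_def using wt vt by blast
    then have "(k, \<lambda>xs. term_op T ?t (xs @ [])) \<in> Clo ar T"
      unfolding Clo_def mem_Collect_eq
      apply -
      apply (rule exI[where x=k], rule exI[where x=k], rule exI[where x="term_op T ?t"], rule exI[where x="[]"])
      apply (intro conjI)
           apply (rule refl)
          apply assumption
         apply (rule order_refl)
        apply simp
       apply simp
      apply simp
      done
    moreover have "\<phi> = top_ext ar T k (\<lambda>xs. term_op T ?t (xs @ []))"
      using ph hB_top[OF wt vt] cl_rep[OF w] by simp
    ultimately show "\<phi> \<in> (\<lambda>(n, f). top_ext ar T n f) ` Clo ar T" by force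
  next
    fix \<phi> assume "\<phi> \<in> (\<lambda>(n, f). top_ext ar T n f) ` Clo ar T"
    then obtain m k g ys where ph: "\<phi> = top_ext ar T m (\<lambda>xs. g (xs @ ys))"
      and kg: "(k, g) \<in> term_ops ar T" and mk: "m \<le> k" and ys: "set ys \<subseteq> FV ar T" "length ys = k - m"
      and ind: "\<forall>xs zs zs'. set xs \<subseteq> FV ar T \<longrightarrow> length xs = m \<longrightarrow>
          set zs \<subseteq> FV ar T \<longrightarrow> length zs = k - m \<longrightarrow>
          set zs' \<subseteq> FV ar T \<longrightarrow> length zs' = k - m \<longrightarrow> g (xs @ zs) = g (xs @ zs')"
      unfolding Clo_def by auto
    obtain t where t: "wf_trm ar t" and vt: "vars t \<subseteq> {1..k}" and g: "g = term_op T t"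
      using kg unfolding term_ops_def by auto
    have "\<phi> = hB (cl t)"
    proof
      fix s show "\<phi> s = hB (cl t) s"
      proof (cases "s \<in> Omega ar T")
        case True
        have sF: "\<And>i. 1 \<le> i \<Longrightarrow> s i \<in> FV ar T" using True unfolding Omega_def by auto
        have "\<phi> s = g (map s [1..<m+1] @ ys)" using ph True unfolding top_ext_def by simp
        also have "\<dots> = g (map s [1..<m+1] @ map s [m+1..<k+1])"
          using ind ys sF mk by (intro ind[rule_format]) auto
        also have "map s [1..<m+1] @ map s [m+1..<k+1] = map s [1..<k+1]"
        proof -
          have "[1..<(m+1) + (k-m)] = [1..<m+1] @ [m+1..<(m+1) + (k-m)]" by (rule upt_add_eq_append) simp
          moreover have "(m+1) + (k-m) = k+1" using mk by simp
          ultimately have "[1..<k+1] = [1..<m+1] @ [m+1..<k+1]" by metis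
          then show ?thesis by (metis map_append)
        qed
        also have "g (map s [1..<k+1]) = hB (cl t) s"
          using g top_term[OF True t vt] hB_top[OF t vt] True unfolding top_ext_def by simp
        finally show ?thesis .
      next
        case False
        then show ?thesis using ph unfolding hB_def top_ext_def by simp
      qed
    qed
    then show "\<phi> \<in> hB ` FV ar T" using cl_in_FV[OF t] by blast
  qed
qed

lemma seq_upd_Om: assumes s: "s \<in> Omega ar T" and bs: "set bs \<subseteq> FV ar T"
  shows "seq_upd s bs \<in> Omega ar T"
  using s bs unfolding Omega_def seq_upd_def by auto

lemma part5: "clone_iso ar (ClV ar T) (Blk ar T) hB"
  unfolding clone_iso_def ClV_simps
proof (intro conjI allI impI)
  show "bij_betw hB (FV ar T) (carrier (Blk ar T))" by (rule hB_bij)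
next
  fix f xs assume xs: "set xs \<subseteq> FV ar T" and l: "length xs = ar f"
  have wr: "\<And>x. x \<in> set xs \<Longrightarrow> wf_trm ar (rep x)" using xs FV_elem(2) by blast
  show "hB (FV_op T f xs) = ops (Blk ar T) f (map hB xs)"
    unfolding Blk_simps
  proof
    fix s show "hB (FV_op T f xs) s = restrict (\<lambda>s. FV_op T f (map (\<lambda>\<psi>. \<psi> s) (map hB xs))) (Omega ar T) s"
    proof (cases "s \<in> Omega ar T")
      case True
      let ?\<sigma> = "\<lambda>i. rep (s i)"
      have wF: "wf_trm ar (Fn f (map rep xs))" using wr l by auto
      have inF: "Fn f (map rep xs) \<in> FV_op T f xs" unfolding FV_op_eq using reflT[OF wF] by simp
      have "hB (FV_op T f xs) s = cl (subst ?\<sigma> (Fn f (map rep xs)))"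
        by (rule hB_app[OF True FV_op_in[OF xs l] inF])
      also have "\<dots> = cl (Fn f (map (subst ?\<sigma>) (map rep xs)))" by simp
      also have "\<dots> = FV_op T f (map cl (map (subst ?\<sigma>) (map rep xs)))"
      proof (rule FV_op_cls[symmetric])
        fix u assume "u \<in> set (map (subst ?\<sigma>) (map rep xs))"
        then obtain x where x: "x \<in> set xs" "u = subst ?\<sigma> (rep x)" by auto
        show "wf_trm ar u" unfolding x(2)
          by (rule wf_subst[OF wr[OF x(1)]]) (meson Om_wf[OF True] wf_vars_ge1 wr[OF x(1)])
      next
        show "length (map (subst ?\<sigma>) (map rep xs)) = ar f" using l by simp
      qed
      also have "map cl (map (subst ?\<sigma>) (map rep xs)) = map (\<lambda>\<psi>. \<psi> s) (map hB xs)"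
        using True xs unfolding hB_def by auto
      finally show ?thesis using True by simp
    next
      case False
      then show ?thesis unfolding hB_def by simp
    qed
  qed
next
  fix n x ys assume x: "x \<in> FV ar T" and ys: "set ys \<subseteq> FV ar T" and l: "length ys = n"
  have ys': "set ys \<subseteq> FV ar T" "length ys = n" using ys l by auto
  show "hB (FV_q ar T n x ys) = qop (Blk ar T) n (hB x) (map hB ys)"
    unfolding Blk_simps
  proof
    fix s
    show "hB (FV_q ar T n x ys) s = restrict (\<lambda>s. hB x (seq_upd s (map (\<lambda>\<psi>. \<psi> s) (map hB ys)))) (Omega ar T) s"
    proof (cases "s \<in> Omega ar T")
      case True
      let ?\<sigma> = "\<lambda>i. rep (s i)"
      let ?s' = "seq_upd s (map (\<lambda>\<psi>. \<psi> s) (map hB ys))"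
      have wx: "wf_trm ar (rep x)" using FV_elem(2)[OF x] .
      have hys: "\<And>y. y \<in> set ys \<Longrightarrow> hB y s = cl (subst ?\<sigma> (rep y))"
        using True ys unfolding hB_def by auto
      have wys: "\<And>y. y \<in> set ys \<Longrightarrow> wf_trm ar (subst ?\<sigma> (rep y))"
      proof -
        fix y assume y: "y \<in> set ys"
        have wy: "wf_trm ar (rep y)" using y ys FV_elem(2) by blast
        show "wf_trm ar (subst ?\<sigma> (rep y))"
          by (rule wf_subst[OF wy]) (meson Om_wf[OF True] wf_vars_ge1 wy)
      qed
      have s'F: "set (map (\<lambda>\<psi>. \<psi> s) (map hB ys)) \<subseteq> FV ar T"
        using hys wys cl_in_FV by auto
      have s': "?s' \<in> Omega ar T" by (rule seq_upd_Om[OF True s'F])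
      have wq: "wf_trm ar (subst (thq n ys) (rep x))"
        by (rule wf_subst[OF wx]) (meson thq_wf[OF ys'] wf_vars_ge1 wx)
      have qx: "FV_q ar T n x ys = cl (subst (thq n ys) (rep x))" by (rule q_eval[OF ys' x])
      have "hB (FV_q ar T n x ys) s = cl (subst ?\<sigma> (subst (thq n ys) (rep x)))"
        unfolding qx by (rule hB_app[OF True cl_in_FV[OF wq]]) (use reflT[OF wq] in simp)
      also have "\<dots> = cl (subst (subst ?\<sigma> \<circ> thq n ys) (rep x))" by (simp add: subst_subst)
      also have "\<dots> = cl (subst (\<lambda>i. rep (?s' i)) (rep x))"
      proof (rule cl_subst_cong[OF wx])
        fix i assume "i \<in> vars (rep x)"
        then have i: "1 \<le> i" using wf_vars_ge1 wx by blast
        show "((subst ?\<sigma> \<circ> thq n ys) i, rep (?s' i)) \<in> T"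
        proof (cases "i \<le> n")
          case True
          have y: "ys ! (i - 1) \<in> set ys" using i True l by auto
          have "?s' i = hB (ys ! (i - 1)) s" using i True l unfolding seq_upd_def by simp
          also have "\<dots> = cl (subst ?\<sigma> (rep (ys ! (i - 1))))" by (rule hys[OF y])
          finally show ?thesis using True i symT[OF rep_cl[OF wys[OF y]]] by (simp add: thq_def)
        next
          case False
          then have "?s' i = s i" using l unfolding seq_upd_def by simp
          then show ?thesis using False i reflT Om_wf[OF \<open>s \<in> Omega ar T\<close> i] by (simp add: thq_def)
        qed
      qed
      also have "\<dots> = hB x ?s'" by (rule hB_app[OF s' x FV_elem(1)[OF x], symmetric])
      finally show ?thesis using True by simp
    next
      case False
      then show ?thesis unfolding hB_def by simp
    qed
  qed
next
  fix i :: nat assume i: "1 \<le> i"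
  show "hB (FV_var T i) = eop (Blk ar T) i"
    unfolding Blk_simps
  proof
    fix s show "hB (FV_var T i) s = restrict (\<lambda>s. s i) (Omega ar T) s"
    proof (cases "s \<in> Omega ar T")
      case True
      have "Var i \<in> FV_var T i" unfolding FV_var_def using reflT[of "Var i"] i by simp
      then have "hB (FV_var T i) s = cl (rep (s i))" using hB_app[OF True FV_var_in[OF i]] by simp
      also have "\<dots> = s i" using True i cl_rep unfolding Omega_def by auto
      finally show ?thesis using True by simp
    next
      case False
      then show ?thesis unfolding hB_def by simp
    qed
  qed
qed

end

theorem proposition10p3:
  fixes ar :: "'f \<Rightarrow> nat" and T :: "('f trm \<times> 'f trm) set"
  assumes "eq_theory ar T"
  shows "(clone_algebra ar (ClV ar T) \<and> finite_dimensional (ClV ar T))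
    \<and> (\<exists>h. bij_betw h (Con ar (ClV ar T)) (LT ar T) \<and>
          (\<forall>\<theta>1\<in>Con ar (ClV ar T). \<forall>\<theta>2\<in>Con ar (ClV ar T). \<theta>1 \<subseteq> \<theta>2 \<longleftrightarrow> h \<theta>1 \<subseteq> h \<theta>2))
    \<and> (\<forall>w\<in>FV ar T. \<forall>n>0. has_dim (ClV ar T) w n \<longrightarrow> (\<exists>t\<in>w. vars t \<subseteq> {1..n}))
    \<and> (\<forall>w\<in>FV ar T. has_dim (ClV ar T) w 0 \<longrightarrow>
          (\<exists>t\<in>w. vars t \<subseteq> {1} \<and> (t, subst (\<lambda>i. if i = 1 then Var 2 else Var i) t) \<in> T))
    \<and> (\<exists>h. clone_iso ar (ClV ar T) (Blk ar T) h)"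
proof -
  interpret eqth ar T by unfold_locales (rule assms)
  show ?thesis using clone_alg fin_dim part2 part3 part4 part5 by blast
qed


end
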